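(* Let $q$ be a prime power, $n=q^4-1$, and let $I_x=\{x,y\}$ be a cyclotomic coset of cardinality $2$ whose minimal representative is $x=(a_0,a_1,a_2,a_3)$. Then $qx>qy$ if and only if $a_2>a_0$, or $a_2=a_0$ and $a_1>a_3$; and $qx<qy$ if and only if $a_2<a_0$, or $a_2=a_0$ and $a_1<a_3$ (where $qx,qy$ are reduced modulo $n$ into $\{0,\ldots,n-1\}$).
   Context: Identify $\mathbb{Z}_n$ with $\{0,\ldots,n-1\}$. The $q$-adic 4-tuple $(a_0,a_1,a_2,a_3)$ denotes $a_0+a_1q+a_2q^2+a_3q^3$ with $0\le a_i<q$. The cyclotomic coset of $x$ with respect to $q^2$ is $I_x=\{x,\,q^2x\bmod n\}$; its minimal representative is its least element. *)

theory Defs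
  imports "HOL-Computational_Algebra.Primes"
begin

definition prime_power :: "nat \<Rightarrow> bool" where
  "prime_power q \<longleftrightarrow> (\<exists>p k. prime p \<and> k \<ge> 1 \<and> q = p ^ k)"

definition cyc_coset :: "nat \<Rightarrow> nat \<Rightarrow> nat set" where
  "cyc_coset q x = {x, (q^2 * x) mod (q^4 - 1)}"

definition qdigit :: "nat \<Rightarrow> nat \<Rightarrow> nat \<Rightarrow> nat" where
  "qdigit q x i = (x div q ^ i) mod q"

end

theory Submission
  imports Defs
begin

definition NN :: "nat \<Rightarrow> nat \<Rightarrow> nat \<Rightarrow> nat \<Rightarrow> nat \<Rightarrow> nat" where
  "NN q a b c d = a + q*(b + q*(c + q*d))"

lemma L1:
  fixes a b q X Y :: nat
  assumes "a < q" "b < q"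
  shows "(a + q*X = b + q*Y) \<longleftrightarrow> (a = b \<and> X = Y)"
proof
  assume h: "a + q*X = b + q*Y"
  have "(a + q*X) mod q = (b + q*Y) mod q" using h by simp
  hence ab: "a = b" using assms by simp
  have "(a + q*X) div q = (b + q*Y) div q" using h by simp
  hence "X = Y" using assms by simp
  thus "a = b \<and> X = Y" using ab by simp
qed simp

lemma L2:
  fixes a b q X Y :: nat
  assumes "a < q" "b < q"
  shows "(a + q*X < b + q*Y) \<longleftrightarrow> (X < Y \<or> (X = Y \<and> a < b))"
proof (cases "X < Y")
  case True
  then have "q*(X+1) \<le> q*Y" using mult_le_mono2[of "X+1" Y q] by simp
  then show ?thesis using True assms by (simp add: algebra_simps)
next
  case False
  show ?thesis
  proof (cases "X = Y")
    case True then show ?thesis by simp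
  next
    case F2: False
    with False have "Y < X" by simp
    then have "q*(Y+1) \<le> q*X" using mult_le_mono2[of "Y+1" X q] by simp
    then show ?thesis using \<open>Y < X\<close> assms by (simp add: algebra_simps)
  qed
qed

lemma L4: "q \<ge> 1 \<Longrightarrow> q^4 - 1 = NN q (q-1) (q-1) (q-1) (q-1)"
proof -
  assume "q \<ge> 1"
  then obtain r where r: "q = Suc r" by (cases q) auto
  show ?thesis unfolding NN_def r by (simp add: algebra_simps power_def)
qed

lemma L3:
  fixes a b c d q :: nat
  assumes "a < q" "b < q" "c < q" "d < q"
  shows "NN q a b c d \<le> q^4 - 1"
proof -
  have q1: "q \<ge> 1" using assms by simp
  have "NN q a b c d \<le> NN q (q-1) (q-1) (q-1) (q-1)"
    unfolding NN_def using assms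
    by (intro add_mono mult_le_mono order_refl) auto
  thus ?thesis using L4[OF q1] by simp
qed

lemma L5:
  fixes a b c d q :: nat
  assumes "a < q" "b < q" "c < q" "d < q"
    and nm: "\<not> (a = q-1 \<and> b = q-1 \<and> c = q-1 \<and> d = q-1)"
  shows "(q * NN q a b c d) mod (q^4 - 1) = NN q d a b c"
proof -
  have q1: "q \<ge> 1" using assms by simp
  have le: "NN q d a b c \<le> q^4 - 1" using L3 assms by simp
  have ne: "NN q d a b c \<noteq> q^4 - 1"
  proof
    assume "NN q d a b c = q^4 - 1"
    hence "NN q d a b c = NN q (q-1) (q-1) (q-1) (q-1)" using L4[OF q1] by simp
    hence h: "d + q*(a + q*(b+q*c)) = (q-1) + q*((q-1) + q*((q-1)+q*(q-1)))"
      unfolding NN_def .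
    have qq: "q - 1 < q" using q1 by simp
    from h have "d = q-1 \<and> a = q-1 \<and> b = q-1 \<and> c = q-1"
      by (simp only: L1[OF assms(4) qq] L1[OF assms(1) qq] L1[OF assms(2) qq] mult_cancel1)
    thus False using nm by simp
  qed
  have lt: "NN q d a b c < q^4 - 1" using le ne by simp
  have p: "q^4 = (q^4 - 1) + 1" using q1 by simp
  have "q * NN q a b c d = d * q^4 + NN q d a b c - d"
    unfolding NN_def by (simp add: algebra_simps power_def)
  also have "\<dots> = d * (q^4 - 1) + NN q d a b c"
    by (subst p) (simp add: algebra_simps)
  finally show ?thesis using lt by simp
qed

theorem mainTheorem11:
  fixes q x y :: nat
  assumes "prime_power q"
    and "x < q^4 - 1"
    and "cyc_coset q x = {x, y}"
    and "card (cyc_coset q x) = 2"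
    and "Min (cyc_coset q x) = x"
  shows "((q * x) mod (q^4 - 1) > (q * y) mod (q^4 - 1) \<longleftrightarrow>
            qdigit q x 2 > qdigit q x 0 \<or>
            (qdigit q x 2 = qdigit q x 0 \<and> qdigit q x 1 > qdigit q x 3))
       \<and> ((q * x) mod (q^4 - 1) < (q * y) mod (q^4 - 1) \<longleftrightarrow>
            qdigit q x 2 < qdigit q x 0 \<or>
            (qdigit q x 2 = qdigit q x 0 \<and> qdigit q x 1 < qdigit q x 3))"
proof -
  obtain p k where pk: "prime p" "k \<ge> 1" "q = p^k" using assms(1) unfolding prime_power_def by blast
  have "p \<ge> 2" using pk(1) prime_ge_2_nat by blast
  moreover have "p^1 \<le> p^k" using pk(2) \<open>p \<ge> 2\<close> by (intro power_increasing) auto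
  ultimately have q2: "q \<ge> 2" using pk(3) by simp
  define n where "n = q^4 - 1"
  define a0 where "a0 = qdigit q x 0"
  define a1 where "a1 = qdigit q x 1"
  define a2 where "a2 = qdigit q x 2"
  define a3 where "a3 = qdigit q x 3"
  have qp: "q > 0" using q2 by simp
  have b: "a0 < q" "a1 < q" "a2 < q" "a3 < q"
    unfolding a0_def a1_def a2_def a3_def qdigit_def using qp by auto
  have x4: "x < q^4" using assms(2) by simp
  have x3: "x div q^3 < q"
  proof -
    have "q^4 = q^3 * q" by (simp add: power_Suc2[symmetric] del: power_Suc)
    thus ?thesis using x4 qp by (simp add: div_less_iff_less_mult mult.commute)
  qed
  have a3': "a3 = x div q^3" unfolding a3_def qdigit_def using x3 by simp
  define t1 where "t1 = x div q"
  define t2 where "t2 = t1 div q"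
  define t3 where "t3 = t2 div q"
  have e1: "x = x mod q + q * t1" unfolding t1_def by simp
  have e2: "t1 = t1 mod q + q * t2" unfolding t2_def by simp
  have e3: "t2 = t2 mod q + q * t3" unfolding t3_def by simp
  have d2: "x div q^2 = t2" unfolding t2_def t1_def by (simp add: power2_eq_square div_mult2_eq)
  have d3: "x div q^3 = t3" unfolding t3_def t2_def t1_def
    by (simp add: power3_eq_cube div_mult2_eq)
  have ea: "a0 = x mod q" "a1 = t1 mod q" "a2 = t2 mod q" "a3 = t3"
    unfolding a0_def a1_def a2_def a3' qdigit_def d2 d3 t1_def by simp_all
  have xN: "x = NN q a0 a1 a2 a3"
    unfolding NN_def ea by (metis e1 e2 e3)
  have nm: "\<not> (a0 = q-1 \<and> a1 = q-1 \<and> a2 = q-1 \<and> a3 = q-1)"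
    using assms(2) L4[of q] q2 xN by auto
  have y: "y = (q^2 * x) mod n" and xy: "x \<noteq> y"
    using assms(3,4) unfolding cyc_coset_def n_def
    by (auto simp: card_insert_if split: if_splits)
  have r1: "(q*x) mod n = NN q a3 a0 a1 a2"
    unfolding n_def xN using L5 b nm by simp
  have r2: "(q^2*x) mod n = NN q a2 a3 a0 a1"
  proof -
    have "(q^2*x) mod n = (q * ((q*x) mod n)) mod n"
      by (simp add: power2_eq_square mod_mult_right_eq mult.assoc)
    also have "\<dots> = (q * NN q a3 a0 a1 a2) mod n" using r1 by simp
    also have "\<dots> = NN q a2 a3 a0 a1" unfolding n_def
      using L5[of a3 q a0 a1 a2] b nm by auto
    finally show ?thesis .
  qed
  have r3: "(q*y) mod n = NN q a1 a2 a3 a0"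
  proof -
    have "(q*y) mod n = (q * NN q a2 a3 a0 a1) mod n" using y r2 by simp
    also have "\<dots> = NN q a1 a2 a3 a0" unfolding n_def
      using L5[of a2 q a3 a0 a1] b nm by auto
    finally show ?thesis .
  qed
  have neq: "\<not> (a0 = a2 \<and> a1 = a3)"
    using xy y r2 xN by auto
  show ?thesis
    unfolding n_def[symmetric] r1 r3 a0_def[symmetric] a1_def[symmetric]
      a2_def[symmetric] a3_def[symmetric]
    unfolding NN_def using b neq
    by (simp add: L1 L2) (auto)
qed

end
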